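(* Suppose $F$ is a smooth function solving $F''(t) = \left(\frac{2}{t^2} - 3Q(t)^2\right)F(t)$ for $1 \le t < \infty$. Then there are constants $c_1, c_2$ such that $$F(t) = c_1\,(t^2 + \eta_1(t)) + c_2\left(\frac{1}{t} + \eta_2(t)\right),$$ where $\eta_1, \eta_2$ are smooth functions on $[1,\infty)$ satisfying $\sup_{1\le t<\infty}\left(|e^t\eta_1(t)| + |e^t\eta_2(t)|\right) < \infty$.
   Context: $Q(t)$, $t \ge 0$, denotes the radial profile of the positive radial ground state of $\Delta\phi - \phi + |\phi|^2\phi = 0$ on $\mathbb{R}^3$. That is, $Q(x) = Q(|x|)$ is the positive radial solution, and its profile solves $-Q'' - \frac{2}{t}Q' + Q - Q^3 = 0$. *)

theory Defs
  imports "HOL-Analysis.Analysis"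
begin

definition smooth_on_real :: "real set \<Rightarrow> (real \<Rightarrow> real) \<Rightarrow> bool" where
  "smooth_on_real S f \<longleftrightarrow>
     (\<exists>D :: nat \<Rightarrow> real \<Rightarrow> real. D 0 = f \<and>
        (\<forall>n. \<forall>t\<in>S. (D n has_real_derivative D (Suc n) t) (at t within S)))"

text \<open>Radial profile of a positive radial ground state of
  Delta phi - phi + phi^3 = 0 on R^3: a positive, decaying solution of
  -Q'' - (2/t) Q' + Q - Q^3 = 0 on (0,inf), regular at the origin (Q'(0) = 0).\<close>
definition ground_state_profile :: "(real \<Rightarrow> real) \<Rightarrow> bool" where
  "ground_state_profile Q \<longleftrightarrow>
     (\<forall>t\<ge>0. Q t > 0) \<and>
     (\<exists>Q' Q'' :: real \<Rightarrow> real.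
        (\<forall>t\<ge>0. (Q has_real_derivative Q' t) (at t within {0..})) \<and>
        (\<forall>t\<ge>0. (Q' has_real_derivative Q'' t) (at t within {0..})) \<and>
        Q' 0 = 0 \<and>
        (\<forall>t>0. - Q'' t - (2 / t) * Q' t + Q t - (Q t) ^ 3 = 0)) \<and>
     (Q \<longlongrightarrow> 0) at_top"

end

theory Submission
  imports Defs "HOL-Real_Asymp.Real_Asymp"
begin

lemma exp_dom_integrable:
  fixes h :: "real \<Rightarrow> real"
  assumes "continuous_on {a..} h" "\<And>s. s \<ge> a \<Longrightarrow> \<bar>h s\<bar> \<le> C * exp (-s)"
  shows "h integrable_on {a..}"
proof (rule measurable_bounded_by_integrable_imp_integrable_real)
  show "h \<in> borel_measurable (lebesgue_on {a..})"
    by (rule continuous_imp_measurable_on_sets_lebesgue) (use assms in auto)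
  show "(\<lambda>s. C * exp (-s)) integrable_on {a..}"
    using integrable_on_exp_minus_to_infinity[of 1 a] integrable_on_cmult_left by fastforce
qed (use assms in auto)

lemma tail_split:
  fixes h :: "real \<Rightarrow> real"
  assumes "continuous_on {a..} h" "\<And>s. s \<ge> a \<Longrightarrow> \<bar>h s\<bar> \<le> C * exp (-s)" "a \<le> t"
  shows "integral {t..} h = integral {a..} h - integral {a..t} h"
proof -
  have i1: "h integrable_on {t..}"
    by (rule exp_dom_integrable[of t h C]) (use assms in \<open>auto intro: continuous_on_subset\<close>)
  have i2: "h integrable_on {a..t}"
    by (rule integrable_continuous_interval) (use assms in \<open>auto intro: continuous_on_subset\<close>)
  have "(h has_integral (integral {a..t} h + integral {t..} h)) ({a..t} \<union> {t..})"
  proof (rule has_integral_Un)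
    have "{a..t} \<inter> {t..} = {t}" using assms(3) by auto
    then show "negligible ({a..t} \<inter> {t..})" by (simp add: negligible_sing)
  qed (use i1 i2 in auto)
  moreover have "{a..t} \<union> {t..} = {a..}" using assms(3) by auto
  ultimately show ?thesis by (simp add: integral_unique)
qed

lemma tail_deriv:
  fixes h :: "real \<Rightarrow> real"
  assumes "continuous_on {a..} h" "\<And>s. s \<ge> a \<Longrightarrow> \<bar>h s\<bar> \<le> C * exp (-s)" "a \<le> t"
  shows "((\<lambda>x. integral {x..} h) has_real_derivative - h t) (at t within {a..})"
proof -
  have "((\<lambda>x. integral {a..x} h) has_real_derivative h t) (at t within {a..t+1})"
    by (rule integral_has_real_derivative) (use assms in \<open>auto intro: continuous_on_subset\<close>)
  moreover have "at t within {a..t+1} = at t within {a..}"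
    by (rule at_within_nhd[of _ "{..<t+1}"]) auto
  ultimately have "((\<lambda>x. integral {a..x} h) has_real_derivative h t) (at t within {a..})" by simp
  then have d1: "((\<lambda>x. integral {a..} h - integral {a..x} h) has_real_derivative 0 - h t) (at t within {a..})"
    by (intro DERIV_diff DERIV_const)
  have eq: "\<And>x. x \<in> {a..} \<Longrightarrow> dist x t < 1 \<Longrightarrow> integral {a..} h - integral {a..x} h = integral {x..} h"
    using tail_split[OF assms(1,2)] by (metis atLeast_iff)
  have mem: "t \<in> {a..}" using assms(3) by simp
  show ?thesis
    using has_field_derivative_transform_within[OF d1 zero_less_one mem eq] by simp
qed

lemma improper_FTC:
  fixes g G :: "real \<Rightarrow> real"
  assumes "\<And>x. x \<ge> a \<Longrightarrow> (G has_real_derivative g x) (at x)"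
    and "continuous_on {a..} g" "\<And>x. x \<ge> a \<Longrightarrow> g x \<ge> 0" "(G \<longlongrightarrow> L) at_top"
  shows "(g has_integral (L - G a)) {a..}"
proof (rule has_integral_to_inf)
  show "g integrable_on {a..y}" for y
    by (rule integrable_continuous_interval, rule continuous_on_subset[OF assms(2)]) auto
  have ftc: "(g has_integral (G y - G a)) {a..y}" if "y \<ge> a" for y
  proof (rule fundamental_theorem_of_calculus)
    show "a \<le> y" by fact
    fix x assume "x \<in> {a..y}"
    then have "(G has_real_derivative g x) (at x)" by (intro assms(1)) auto
    then have "(G has_real_derivative g x) (at x within {a..y})"
      by (rule has_field_derivative_at_within)
    then show "(G has_vector_derivative g x) (at x within {a..y})"
      by (simp add: has_real_derivative_iff_has_vector_derivative)
  qed
  have ev: "\<forall>\<^sub>F y in at_top. G y - G a = integral {a..y} g"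
    unfolding eventually_at_top_linorder
  proof (intro exI[of _ a] allI impI)
    fix y assume "a \<le> y"
    show "G y - G a = integral {a..y} g"
      using integral_unique[OF ftc[OF \<open>a \<le> y\<close>]] by simp
  qed
  have lim: "((\<lambda>y. G y - G a) \<longlongrightarrow> L - G a) at_top"
    by (intro tendsto_intros assms)
  show "((\<lambda>y. integral {a..y} g) \<longlongrightarrow> L - G a) at_top"
    by (rule Lim_transform_eventually[OF lim ev])
next
  show "\<And>y. a \<le> y \<Longrightarrow> 0 \<le> g y" by (rule assms(3))
qed

lemma decay_Q:
  fixes Q Q' Q'' :: "real \<Rightarrow> real"
  assumes dQ: "\<And>t. t > 0 \<Longrightarrow> (Q has_real_derivative Q' t) (at t)"
    and dQ': "\<And>t. t > 0 \<Longrightarrow> (Q' has_real_derivative Q'' t) (at t)"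
    and ode: "\<And>t. t > 0 \<Longrightarrow> Q'' t = Q t - (Q t)^3 - 2 / t * Q' t"
    and pos: "\<And>t. t \<ge> 0 \<Longrightarrow> Q t > 0"
    and lim: "(Q \<longlongrightarrow> 0) at_top"
  shows "\<exists>C. \<forall>t\<ge>1. Q t \<le> C * exp (-(3/4) * t)"
proof -
  define u where "u t = t * Q t" for t
  define u' where "u' t = Q t + t * Q' t" for t
  have du: "(u has_real_derivative u' t) (at t)" if "t > 0" for t
    unfolding u_def[abs_def] u'_def using dQ[OF that]
    by (auto intro!: derivative_eq_intros)
  have du': "(u' has_real_derivative u t * (1 - (Q t)^2)) (at t)" if "t > 0" for t
  proof -
    have "(u' has_real_derivative Q' t + (1 * Q' t + t * Q'' t)) (at t)"
      unfolding u'_def[abs_def] using dQ[OF that] dQ'[OF that]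
      by (auto intro!: derivative_eq_intros)
    moreover have "Q' t + (1 * Q' t + t * Q'' t) = u t * (1 - (Q t)^2)"
      using ode[OF that] that unfolding u_def by (simp add: field_simps power3_eq_cube power2_eq_square)
    ultimately show ?thesis by simp
  qed
  obtain T0 where T0: "\<And>t. t \<ge> T0 \<Longrightarrow> Q t \<le> 1/4"
    using order_tendstoD(2)[OF lim, of "1/4"] unfolding eventually_at_top_linorder
    by (auto intro: less_imp_le)
  define T where "T = max T0 1"
  have T1: "T \<ge> 1" and TQ: "\<And>t. t \<ge> T \<Longrightarrow> Q t \<le> 1/4" using T0 by (auto simp: T_def)
  define C0 where "C0 = u T * exp ((3/4) * T)"
  have uT: "u T > 0" using pos[of T] T1 by (simp add: u_def)
  then have C0pos: "C0 > 0" by (simp add: C0_def)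
  have claim: "u t \<le> C0 * exp (-(3/4) * t) + e * exp ((7/8) * t)" if e: "e > 0" and t: "t \<ge> T" for e t
  proof (rule ccontr)
    define w where "w s = u s - C0 * exp (-(3/4) * s) - e * exp ((7/8) * s)" for s
    define w' where "w' s = u' s + (3/4) * C0 * exp (-(3/4) * s) - (7/8) * e * exp ((7/8) * s)" for s
    define w'' where "w'' s = u s * (1 - (Q s)^2) - (9/16) * C0 * exp (-(3/4) * s) - (49/64) * e * exp ((7/8) * s)" for s
    have dw: "(w has_real_derivative w' s) (at s)" if "s > 0" for s
      unfolding w_def[abs_def] w'_def using du[OF that]
      by (auto intro!: derivative_eq_intros simp: field_simps)
    have dw': "(w' has_real_derivative w'' s) (at s)" if "s > 0" for s
      unfolding w'_def[abs_def] w''_def using du'[OF that]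
      by (auto intro!: derivative_eq_intros simp: field_simps)
    assume "\<not> ?thesis"
    then have wt: "w t > 0" by (simp add: w_def)
    have wT: "w T < 0" using e by (simp add: w_def C0_def exp_minus field_simps)
    have "((\<lambda>s::real. s * exp (-(7/8) * s)) \<longlongrightarrow> 0) at_top" by real_asymp
    then have "\<forall>\<^sub>F s in at_top. s * exp (-(7/8) * s) < 4 * e"
      using e by (intro order_tendstoD(2)) auto
    then obtain R0 where R0: "\<And>s. s \<ge> R0 \<Longrightarrow> s * exp (-(7/8) * s) < 4 * e"
      unfolding eventually_at_top_linorder by auto
    define R where "R = max R0 (t + 1)"
    have Rt: "R > t" and RR0: "R \<ge> R0" by (auto simp: R_def)
    have wR: "w R < 0"
    proof -
      have "R \<ge> T" using Rt t by auto
      then have q: "Q R \<le> 1/4" "Q R > 0" using TQ[of R] pos[of R] T1 by auto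
      have "R * exp (-(7/8) * R) < 4 * e" using R0[OF RR0] .
      then have "R < 4 * e * exp ((7/8) * R)"
        by (simp add: exp_minus field_simps)
      moreover have "u R \<le> R / 4" using q \<open>R \<ge> T\<close> T1 by (simp add: u_def mult_left_le)
      ultimately have "u R < e * exp ((7/8) * R)" by simp
      then show ?thesis using C0pos by (simp add: w_def) (smt (verit) exp_gt_zero mult_pos_pos)
    qed
    have contw: "continuous_on {T..R} w"
    proof (intro continuous_at_imp_continuous_on ballI)
      fix x assume "x \<in> {T..R}"
      then have "x > 0" using T1 by auto
      then show "isCont w x" using dw DERIV_isCont by blast
    qed
    obtain m where m: "m \<in> {T..R}" "\<And>s. s \<in> {T..R} \<Longrightarrow> w s \<le> w m"
      using continuous_attains_sup[OF compact_Icc _ contw] Rt t by fastforce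
    have wm: "w m > 0" using m(2)[of t] t Rt wt by auto
    have mT: "m > T" using m(1) wm wT by (cases "m = T") auto
    have mR: "m < R" using m(1) wm wR by (cases "m = R") auto
    have m0: "m > 0" using mT T1 by auto
    have w'm: "w' m = 0"
    proof (rule DERIV_local_max[OF dw[OF m0]])
      show "0 < min (m - T) (R - m)" using mT mR by auto
      show "\<forall>y. \<bar>m - y\<bar> < min (m - T) (R - m) \<longrightarrow> w y \<le> w m"
      proof (intro allI impI)
        fix y assume "\<bar>m - y\<bar> < min (m - T) (R - m)"
        then have "y \<in> {T..R}" by (auto simp: abs_if split: if_splits)
        then show "w y \<le> w m" by (rule m(2))
      qed
    qed
    have w''m: "w'' m > 0"
    proof -
      have um: "u m > C0 * exp (-(3/4) * m) + e * exp ((7/8) * m)" using wm by (simp add: w_def)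
      have qm: "Q m \<le> 1/4" "Q m > 0" using TQ[of m] pos[of m] mT m0 by auto
      have "(Q m)^2 \<le> (1/4)^2" using qm by (intro power_mono) auto
      then have "(Q m)^2 \<le> 1/16" by (simp add: power2_eq_square)
      then have f: "1 - (Q m)^2 \<ge> 49/64" by simp
      have up: "u m > 0" using um C0pos e by (smt (verit) exp_gt_zero mult_pos_pos)
      have "u m * (1 - (Q m)^2) \<ge> u m * (49/64)" using f up by (intro mult_left_mono) auto
      moreover have "u m * (49/64) > (49/64) * C0 * exp (-(3/4) * m) + (49/64) * e * exp ((7/8) * m)"
        using um by simp
      moreover have "(49/64) * C0 * exp (-(3/4) * m) \<ge> (9/16) * C0 * exp (-(3/4) * m)"
        using C0pos by (intro mult_right_mono) auto
      ultimately show ?thesis by (simp add: w''_def)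
    qed
    obtain d where d: "d > 0" "\<And>h. h > 0 \<Longrightarrow> h < d \<Longrightarrow> w' m < w' (m + h)"
      using DERIV_pos_inc_right[OF dw'[OF m0] w''m] by auto
    define h where "h = min d (R - m) / 2"
    have h1: "h > 0" using d(1) mR unfolding h_def min_def by auto
    have h2: "h < d" using d(1) mR unfolding h_def min_def by auto
    have "h \<le> (R - m) / 2" unfolding h_def by (intro divide_right_mono) auto
    then have "2 * h \<le> R - m" by (simp add: field_simps)
    then have h3: "m + h \<le> R" using mR by linarith
    note h = h1 h2 h3
    obtain z where z: "z > m" "z < m + h" "w (m + h) - w m = (m + h - m) * w' z"
      using MVT2[of m "m + h" w w'] h m0 dw by force
    have "w' z > 0" using d(2)[of "z - m"] z h w'm by auto
    then have "h * w' z > 0" using h1 by simp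
    then have "w (m + h) > w m" using z(3) by simp
    moreover have "w (m + h) \<le> w m" using m(2)[of "m + h"] h mT by auto
    ultimately show False by simp
  qed
  have ubound: "u t \<le> C0 * exp (-(3/4) * t)" if t: "t \<ge> T" for t
  proof (rule ccontr)
    assume nt: "\<not> u t \<le> C0 * exp (-(3/4) * t)"
    define e where "e = (u t - C0 * exp (-(3/4) * t)) / (2 * exp ((7/8) * t))"
    have e: "e > 0" using nt by (simp add: e_def)
    have "e * exp ((7/8) * t) = (u t - C0 * exp (-(3/4) * t)) / 2" by (simp add: e_def)
    then show False using claim[OF e t] nt by simp
  qed
  have contQ: "continuous_on {1..T} Q"
  proof (intro continuous_at_imp_continuous_on ballI)
    fix x assume "x \<in> {1..T}"
    then have "x > 0" by auto
    then show "isCont Q x" using dQ DERIV_isCont by blast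
  qed
  obtain M where M: "\<And>s. s \<in> {1..T} \<Longrightarrow> Q s \<le> M"
    using continuous_attains_sup[OF compact_Icc _ contQ] T1 by fastforce
  have M0: "M > 0" using M[of 1] pos[of 1] T1 by auto
  show ?thesis
  proof (intro exI[of _ "C0 + M * exp ((3/4) * T)"] allI impI)
    fix t :: real assume t: "t \<ge> 1"
    have e1: "exp (-(3/4) * t) > 0" by simp
    show "Q t \<le> (C0 + M * exp ((3/4) * T)) * exp (-(3/4) * t)"
    proof (cases "t \<ge> T")
      case True
      have "Q t \<le> u t" using pos[of t] t by (simp add: u_def mult_le_cancel_right1 less_imp_le)
      also have "\<dots> \<le> C0 * exp (-(3/4) * t)" using ubound True by simp
      also have "\<dots> \<le> (C0 + M * exp ((3/4) * T)) * exp (-(3/4) * t)"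
        using M0 e1 by (intro mult_right_mono) auto
      finally show ?thesis .
    next
      case False
      have "Q t \<le> M" using M[of t] t False by auto
      also have "\<dots> \<le> M * (exp ((3/4) * T) * exp (-(3/4) * t))"
      proof -
        have "exp ((3/4) * T) * exp (-(3/4) * t) = exp ((3/4) * (T - t))"
          by (simp add: exp_add[symmetric] algebra_simps)
        also have "\<dots> \<ge> 1" using False by simp
        finally show ?thesis using M0 by simp
      qed
      also have "\<dots> \<le> (C0 + M * exp ((3/4) * T)) * exp (-(3/4) * t)"
        using C0pos e1 by (simp add: algebra_simps)
      finally show ?thesis .
    qed
  qed
qed

lemma s4_bound:
  fixes s :: real assumes "s \<ge> 0"
  shows "s^4 * exp (-(3/2) * s) \<le> 4096 * exp (-s)"
proof -
  have a: "s / 8 \<le> exp (s / 8)" using exp_ge_add_one_self[of "s/8"] by linarith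
  have "(s/8)^4 \<le> (exp (s/8))^4" using a assms by (intro power_mono) auto
  also have "(exp (s/8))^4 = exp (s/2)" by (simp add: exp_of_nat_mult[symmetric])
  finally have "s^4 \<le> 4096 * exp (s/2)" by (simp add: power_divide)
  then have "s^4 * exp (-(3/2) * s) \<le> 4096 * exp (s/2) * exp (-(3/2) * s)"
    by (intro mult_right_mono) auto
  also have "\<dots> = 4096 * exp (-s)" by (simp add: mult.assoc exp_add[symmetric])
  finally show ?thesis .
qed

lemma pw_bound:
  fixes s c bs v B N F :: real
  assumes "s \<ge> 1" "\<bar>c\<bar> \<le> s^2" "\<bar>bs\<bar> \<le> B * exp (-(3/2) * s)" "\<bar>v\<bar> \<le> N * s^2 * F"
  shows "\<bar>c * bs * v\<bar> \<le> (4096 * B) * N * F * exp (-s)"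
proof -
  have "0 \<le> B * exp (-(3/2) * s)" using assms(3) abs_ge_zero order_trans by blast
  then have B0: "B \<ge> 0" by (simp add: zero_le_mult_iff)
  have "0 \<le> (N * F) * s^2" using assms(4) abs_ge_zero order_trans by (metis mult.commute mult.left_commute)
  moreover have "s^2 > 0" using assms(1) by simp
  ultimately have NF: "N * F \<ge> 0" by (simp add: zero_le_mult_iff)
  have "\<bar>c * bs * v\<bar> = \<bar>c\<bar> * \<bar>bs\<bar> * \<bar>v\<bar>" by (simp add: abs_mult)
  also have "\<dots> \<le> s^2 * (B * exp (-(3/2) * s)) * (N * s^2 * F)"
    using assms by (intro mult_mono) auto
  also have "\<dots> = (B * (N * F)) * (s^4 * exp (-(3/2) * s))" by (simp add: algebra_simps power2_eq_square power4_eq_xxxx)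
  also have "\<dots> \<le> (B * (N * F)) * (4096 * exp (-s))"
    using s4_bound[of s] assms(1) B0 NF by (intro mult_left_mono) auto
  finally show ?thesis by (simp add: algebra_simps)
qed

lemma tail_int_bound:
  fixes f g :: "real \<Rightarrow> real"
  assumes "continuous_on {t..} f" "\<And>s. s \<ge> t \<Longrightarrow> \<bar>f s\<bar> \<le> g s" "(g has_integral I) {t..}"
  shows "\<bar>integral {t..} f\<bar> \<le> I"
  using integral_norm_bound_integral'[of "{t..}" f g I] assms
    continuous_imp_measurable_on_sets_lebesgue[OF assms(1)] by auto

lemma has_integral_exp1:
  "((\<lambda>s. M * exp (-s)) has_integral (M * exp (-t))) {t::real..}"
  using has_integral_mult_right[OF has_integral_exp_minus_to_infinity[of 1 t], of M] by simp

definition EE :: "real \<Rightarrow> real \<Rightarrow> real" where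
  "EE K s = exp (2 * K * exp (-s))"

lemma has_integral_EE:
  assumes "K > 0"
  shows "((\<lambda>s. M * (K * exp (-s) * EE K s)) has_integral (M * ((EE K t - 1) / 2))) {t..}"
proof -
  have "((\<lambda>s. K * exp (-s) * EE K s) has_integral ((-1/2) - (- EE K t / 2))) {t..}"
  proof (rule improper_FTC)
    show "((\<lambda>s. - EE K s / 2) has_real_derivative K * exp (-x) * EE K x) (at x)" for x
      unfolding EE_def by (auto intro!: derivative_eq_intros simp: field_simps)
    show "continuous_on {t..} (\<lambda>s. K * exp (-s) * EE K s)"
      unfolding EE_def by (intro continuous_intros)
    show "K * exp (-x) * EE K x \<ge> 0" for x using assms by (simp add: EE_def)
    have "((\<lambda>s::real. exp (-s)) \<longlongrightarrow> 0) at_top" by real_asymp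
    then have "((\<lambda>s. - exp (2 * K * exp (-s)) / 2) \<longlongrightarrow> - exp (2 * K * 0) / 2) at_top"
      by (intro tendsto_intros) auto
    then show "((\<lambda>s. - EE K s / 2) \<longlongrightarrow> -1/2) at_top"
      unfolding EE_def by simp
  qed
  from has_integral_mult_right[OF this, of M]
  have "((\<lambda>s. M * (K * exp (-s) * EE K s)) has_integral (M * ((-1/2) - (- EE K t / 2)))) {t..}" .
  moreover have "M * ((-1/2) - (- EE K t / 2)) = M * ((EE K t - 1) / 2)" by (simp add: field_simps)
  ultimately show ?thesis by metis
qed

definition Aop :: "(real \<Rightarrow> real) \<Rightarrow> (real \<Rightarrow> real) \<Rightarrow> real \<Rightarrow> real" where
  "Aop b v t = integral {t..} (\<lambda>s. s^2 * b s * v s)"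
definition Bop :: "(real \<Rightarrow> real) \<Rightarrow> (real \<Rightarrow> real) \<Rightarrow> real \<Rightarrow> real" where
  "Bop b v t = integral {t..} (\<lambda>s. b s * v s / s)"
definition Kop :: "(real \<Rightarrow> real) \<Rightarrow> (real \<Rightarrow> real) \<Rightarrow> real \<Rightarrow> real" where
  "Kop b v t = Aop b v t / (3 * t) - t^2 * Bop b v t / 3"

context
  fixes b :: "real \<Rightarrow> real" and B :: real
  assumes bcont: "continuous_on {1..} b"
    and bbd: "\<And>s. s \<ge> 1 \<Longrightarrow> \<bar>b s\<bar> \<le> B * exp (-(3/2) * s)"
begin

lemma gen_bound:
  fixes c v F g :: "real \<Rightarrow> real"
  assumes t: "t \<ge> 1" and cc: "continuous_on {t..} c" and cb: "\<And>s. s \<ge> t \<Longrightarrow> \<bar>c s\<bar> \<le> \<kappa> * s^2"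
    and \<kappa>: "\<kappa> > 0"
    and vc: "continuous_on {1..} v" and vb: "\<And>s. s \<ge> 1 \<Longrightarrow> \<bar>v s\<bar> \<le> N * s^2 * F s"
    and gb: "\<And>s. s \<ge> t \<Longrightarrow> (4096 * B) * N * F s * exp (-s) \<le> g s"
    and gi: "(g has_integral I) {t..}"
  shows "\<bar>integral {t..} (\<lambda>s. c s * b s * v s)\<bar> \<le> \<kappa> * I"
proof (rule tail_int_bound)
  show "continuous_on {t..} (\<lambda>s. c s * b s * v s)"
    using t by (intro continuous_intros cc continuous_on_subset[OF bcont] continuous_on_subset[OF vc]) auto
  show "((\<lambda>s. \<kappa> * g s) has_integral \<kappa> * I) {t..}" using has_integral_mult_right[OF gi] .
  fix s assume s: "s \<ge> t"
  have "\<bar>(c s / \<kappa>) * b s * v s\<bar> \<le> (4096 * B) * N * F s * exp (-s)"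
    using s t \<kappa> cb[OF s] by (intro pw_bound bbd vb) (auto simp: abs_div field_simps)
  also have "\<dots> \<le> g s" using gb[OF s] .
  finally have "\<bar>c s * b s * v s\<bar> / \<kappa> \<le> g s" using \<kappa> by (simp add: abs_mult abs_div)
  then show "\<bar>c s * b s * v s\<bar> \<le> \<kappa> * g s" using \<kappa> by (simp add: field_simps)
qed

lemma Aop_as: "Aop b v t / (3 * t) = integral {t..} (\<lambda>s. (s^2 / (3 * t)) * b s * v s)"
proof -
  have X: "integral {t..} (\<lambda>s::real. (s^2 / (3 * t)) * b s * v s) = integral {t..} (\<lambda>s. (s^2 * b s * v s) / (3 * t))"
    by (rule integral_cong) simp
  show ?thesis unfolding X Aop_def by simp
qed

lemma Bop_as: "c * Bop b v t = integral {t..} (\<lambda>s. (c / s) * b s * v s)"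
proof -
  have 1: "integral {t..} (\<lambda>s::real. (c / s) * b s * v s) = integral {t..} (\<lambda>s::real. c * (b s * v s / s))"
    by (rule integral_cong) simp
  have 2: "integral {t..} (\<lambda>s::real. c * (b s * v s / s)) = c * integral {t..} (\<lambda>s. b s * v s / s)"
    by (rule integral_mult_right)
  show ?thesis unfolding 1 2 Bop_def ..
qed

lemma Kop_bound:
  fixes v F g :: "real \<Rightarrow> real"
  assumes t: "t \<ge> 1"
    and vc: "continuous_on {1..} v" and vb: "\<And>s. s \<ge> 1 \<Longrightarrow> \<bar>v s\<bar> \<le> N * s^2 * F s"
    and gb: "\<And>s. s \<ge> t \<Longrightarrow> (4096 * B) * N * F s * exp (-s) \<le> g s"
    and gi: "(g has_integral I) {t..}"
  shows "\<bar>Kop b v t\<bar> \<le> 2 * I / 3"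
proof -
  have a: "\<bar>Aop b v t / (3 * t)\<bar> \<le> (1/3) * I"
    unfolding Aop_as
  proof (rule gen_bound[OF t _ _ _ vc vb gb gi])
    show "continuous_on {t..} (\<lambda>s. s\<^sup>2 / (3 * t))" using t by (intro continuous_intros) auto
    fix s assume "s \<ge> t"
    then show "\<bar>s\<^sup>2 / (3 * t)\<bar> \<le> 1 / 3 * s\<^sup>2" using t by (simp add: abs_div field_simps)
  qed auto
  have b: "\<bar>(t^2/3) * Bop b v t\<bar> \<le> (1/3) * I"
    unfolding Bop_as
  proof (rule gen_bound[OF t _ _ _ vc vb gb gi])
    show "continuous_on {t..} (\<lambda>s. (t^2/3) / s)" using t by (intro continuous_intros) auto
    fix s assume s: "s \<ge> t"
    have "t^2 \<le> s^2" using s t by (intro power_mono) auto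
    also have "\<dots> \<le> s * s^2" using s t by (simp add: mult_le_cancel_right1)
    finally have "t^2 / s \<le> s^2" using s t by (simp add: field_simps)
    then show "\<bar>(t^2/3) / s\<bar> \<le> 1 / 3 * s\<^sup>2" using s t by (simp add: abs_div field_simps)
  qed auto
  have "Kop b v t = Aop b v t / (3 * t) - (t^2/3) * Bop b v t" unfolding Kop_def by simp
  then have "\<bar>Kop b v t\<bar> \<le> \<bar>Aop b v t / (3 * t)\<bar> + \<bar>(t^2/3) * Bop b v t\<bar>"
    using abs_triangle_ineq4 by metis
  then show ?thesis using a b by simp
qed

end

context
  fixes b :: "real \<Rightarrow> real" and B :: real
  assumes bcont: "continuous_on {1..} b"
    and bbd: "\<And>s. s \<ge> 1 \<Longrightarrow> \<bar>b s\<bar> \<le> B * exp (-(3/2) * s)"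
begin

lemma hA:
  assumes vc: "continuous_on {1..} v" and vb: "\<And>s. s \<ge> 1 \<Longrightarrow> \<bar>v s\<bar> \<le> N * s^2"
  shows "continuous_on {1..} (\<lambda>s. s^2 * b s * v s)"
    and "\<And>s. s \<ge> 1 \<Longrightarrow> \<bar>s^2 * b s * v s\<bar> \<le> (4096 * B * N) * exp (-s)"
proof -
  show "continuous_on {1..} (\<lambda>s. s^2 * b s * v s)"
    by (intro continuous_intros bcont vc)
  fix s :: real assume s: "s \<ge> 1"
  have "\<bar>s^2 * b s * v s\<bar> \<le> (4096 * B) * N * 1 * exp (-s)"
    using s vb[OF s] by (intro pw_bound bbd) auto
  then show "\<bar>s^2 * b s * v s\<bar> \<le> (4096 * B * N) * exp (-s)" by simp
qed

lemma hB:
  assumes vc: "continuous_on {1..} v" and vb: "\<And>s. s \<ge> 1 \<Longrightarrow> \<bar>v s\<bar> \<le> N * s^2"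
  shows "continuous_on {1..} (\<lambda>s. b s * v s / s)"
    and "\<And>s. s \<ge> 1 \<Longrightarrow> \<bar>b s * v s / s\<bar> \<le> (4096 * B * N) * exp (-s)"
proof -
  show "continuous_on {1..} (\<lambda>s. b s * v s / s)"
    by (intro continuous_intros bcont vc) auto
  fix s :: real assume s: "s \<ge> 1"
  have "1 / s \<le> 1" using s by simp
  also have "1 \<le> s^2" using s by simp
  finally have c: "\<bar>1 / s\<bar> \<le> s^2" using s by simp
  have "\<bar>(1 / s) * b s * v s\<bar> \<le> (4096 * B) * N * 1 * exp (-s)"
    using s vb[OF s] c by (intro pw_bound bbd) auto
  then show "\<bar>b s * v s / s\<bar> \<le> (4096 * B * N) * exp (-s)" by simp
qed

lemma Aop_deriv:
  assumes vc: "continuous_on {1..} v" and vb: "\<And>s. s \<ge> 1 \<Longrightarrow> \<bar>v s\<bar> \<le> N * s^2" and t: "t \<ge> 1"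
  shows "(Aop b v has_real_derivative - (t^2 * b t * v t)) (at t within {1..})"
  unfolding Aop_def[abs_def] by (rule tail_deriv[OF hA(1)[OF vc vb] hA(2)[OF vc vb] t])

lemma Bop_deriv:
  assumes vc: "continuous_on {1..} v" and vb: "\<And>s. s \<ge> 1 \<Longrightarrow> \<bar>v s\<bar> \<le> N * s^2" and t: "t \<ge> 1"
  shows "(Bop b v has_real_derivative - (b t * v t / t)) (at t within {1..})"
  unfolding Bop_def[abs_def] by (rule tail_deriv[OF hB(1)[OF vc vb] hB(2)[OF vc vb] t])

lemma Kop_deriv:
  assumes vc: "continuous_on {1..} v" and vb: "\<And>s. s \<ge> 1 \<Longrightarrow> \<bar>v s\<bar> \<le> N * s^2" and t: "t \<ge> 1"
  shows "(Kop b v has_real_derivative (- Aop b v t / (3 * t^2) - 2 * t * Bop b v t / 3)) (at t within {1..})"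
proof -
  note A = Aop_deriv[OF vc vb t] and Bd = Bop_deriv[OF vc vb t]
  have d1: "((\<lambda>x. Aop b v x / (3 * x)) has_real_derivative
      ((- (t^2 * b t * v t)) * (3 * t) - Aop b v t * (3 * 1)) / ((3 * t) * (3 * t))) (at t within {1..})"
    by (rule DERIV_divide[OF A DERIV_cmult[OF DERIV_ident]]) (use t in auto)
  have d2: "((\<lambda>x. x^2 * Bop b v x) has_real_derivative
      (real 2 * t^(2 - Suc 0)) * Bop b v t + (- (b t * v t / t)) * t^2) (at t within {1..})"
    by (rule DERIV_mult[OF DERIV_pow Bd])
  have "((\<lambda>t. Aop b v t / (3 * t) - t^2 * Bop b v t / 3) has_real_derivative
      ((- (t^2 * b t * v t)) * (3 * t) - Aop b v t * (3 * 1)) / ((3 * t) * (3 * t)) - ((real 2 * t^(2 - Suc 0)) * Bop b v t + (- (b t * v t / t)) * t^2) / 3)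
      (at t within {1..})"
    by (rule DERIV_diff[OF d1 DERIV_cdivide[OF d2]])
  moreover have "((- (t^2 * b t * v t)) * (3 * t) - Aop b v t * (3 * 1)) / ((3 * t) * (3 * t)) - ((real 2 * t^(2 - Suc 0)) * Bop b v t + (- (b t * v t / t)) * t^2) / 3
      = - Aop b v t / (3 * t^2) - 2 * t * Bop b v t / 3"
    using t by (simp add: field_simps power2_eq_square)
  ultimately show ?thesis unfolding Kop_def[abs_def] by simp
qed
end

context
  fixes b :: "real \<Rightarrow> real" and B :: real
  assumes bcont: "continuous_on {1..} b"
    and bbd: "\<And>s. s \<ge> 1 \<Longrightarrow> \<bar>b s\<bar> \<le> B * exp (-(3/2) * s)"
begin

lemma Kop_diff:
  assumes v1c: "continuous_on {1..} v1" and v1b: "\<And>s. s \<ge> 1 \<Longrightarrow> \<bar>v1 s\<bar> \<le> N1 * s^2"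
    and v2c: "continuous_on {1..} v2" and v2b: "\<And>s. s \<ge> 1 \<Longrightarrow> \<bar>v2 s\<bar> \<le> N2 * s^2"
    and t: "t \<ge> 1"
  shows "Kop b (\<lambda>s. v1 s - v2 s) t = Kop b v1 t - Kop b v2 t"
proof -
  have iA: "(\<lambda>s. s^2 * b s * v s) integrable_on {t..}"
    if "continuous_on {1..} v" "\<And>s. s \<ge> 1 \<Longrightarrow> \<bar>v s\<bar> \<le> N * s^2" for v N
  proof (rule exp_dom_integrable)
    show "continuous_on {t..} (\<lambda>s. s^2 * b s * v s)"
      using t by (intro continuous_on_subset[OF hA(1)[OF bcont bbd that]]) auto
    show "\<bar>s^2 * b s * v s\<bar> \<le> (4096 * B * N) * exp (-s)" if "s \<ge> t" for s
      using that t by (intro hA(2)[OF bcont bbd \<open>continuous_on {1..} v\<close>]) (auto intro: \<open>\<And>s. s \<ge> 1 \<Longrightarrow> \<bar>v s\<bar> \<le> N * s^2\<close>)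
  qed
  have iB: "(\<lambda>s. b s * v s / s) integrable_on {t..}"
    if "continuous_on {1..} v" "\<And>s. s \<ge> 1 \<Longrightarrow> \<bar>v s\<bar> \<le> N * s^2" for v N
  proof (rule exp_dom_integrable)
    show "continuous_on {t..} (\<lambda>s. b s * v s / s)"
      using t by (intro continuous_on_subset[OF hB(1)[OF bcont bbd that]]) auto
    show "\<bar>b s * v s / s\<bar> \<le> (4096 * B * N) * exp (-s)" if "s \<ge> t" for s
      using that t by (intro hB(2)[OF bcont bbd \<open>continuous_on {1..} v\<close>]) (auto intro: \<open>\<And>s. s \<ge> 1 \<Longrightarrow> \<bar>v s\<bar> \<le> N * s^2\<close>)
  qed
  have A: "Aop b (\<lambda>s. v1 s - v2 s) t = Aop b v1 t - Aop b v2 t"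
  proof -
    have "Aop b (\<lambda>s. v1 s - v2 s) t = integral {t..} (\<lambda>s. s^2 * b s * v1 s - s^2 * b s * v2 s)"
      unfolding Aop_def by (rule integral_cong) (simp add: algebra_simps)
    also have "\<dots> = Aop b v1 t - Aop b v2 t"
      unfolding Aop_def by (rule integral_diff[OF iA[OF v1c v1b] iA[OF v2c v2b]])
    finally show ?thesis .
  qed
  have Bq: "Bop b (\<lambda>s. v1 s - v2 s) t = Bop b v1 t - Bop b v2 t"
  proof -
    have "Bop b (\<lambda>s. v1 s - v2 s) t = integral {t..} (\<lambda>s. b s * v1 s / s - b s * v2 s / s)"
      unfolding Bop_def by (rule integral_cong) (simp add: algebra_simps diff_divide_distrib)
    also have "\<dots> = Bop b v1 t - Bop b v2 t"
      unfolding Bop_def by (rule integral_diff[OF iB[OF v1c v1b] iB[OF v2c v2b]])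
    finally show ?thesis .
  qed
  show ?thesis unfolding Kop_def A Bq by (simp add: algebra_simps diff_divide_distrib)
qed

lemma Kop_decay:
  assumes vc: "continuous_on {1..} v" and vb: "\<And>s. s \<ge> 1 \<Longrightarrow> \<bar>v s\<bar> \<le> N * s^2" and t: "t \<ge> 1"
  shows "\<bar>Kop b v t\<bar> \<le> 2 * (4096 * B * N * exp (-t)) / 3"
proof (rule Kop_bound[OF bcont bbd t vc, where F="\<lambda>_. 1"])
  show "\<bar>v s\<bar> \<le> N * s^2 * 1" if "s \<ge> 1" for s using vb[OF that] by simp
  show "(4096 * B) * N * 1 * exp (-s) \<le> (4096 * B * N) * exp (-s)" for s by simp
  show "((\<lambda>s. (4096 * B * N) * exp (-s)) has_integral (4096 * B * N * exp (-t))) {t..}"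
    by (rule has_integral_exp1)
qed

lemma Aop_decay:
  assumes vc: "continuous_on {1..} v" and vb: "\<And>s. s \<ge> 1 \<Longrightarrow> \<bar>v s\<bar> \<le> N * s^2" and t: "t \<ge> 1"
  shows "\<bar>Aop b v t\<bar> \<le> 4096 * B * N * exp (-t)"
proof -
  have "\<bar>integral {t..} (\<lambda>s. s^2 * b s * v s)\<bar> \<le> 1 * (4096 * B * N * exp (-t))"
  proof (rule gen_bound[OF bcont bbd t _ _ _ vc, where F="\<lambda>_. 1"])
    show "\<bar>v s\<bar> \<le> N * s^2 * 1" if "s \<ge> 1" for s using vb[OF that] by simp
    show "(4096 * B) * N * 1 * exp (-s) \<le> (4096 * B * N) * exp (-s)" for s by simp
    show "((\<lambda>s. (4096 * B * N) * exp (-s)) has_integral (4096 * B * N * exp (-t))) {t..}"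
      by (rule has_integral_exp1)
  qed (auto intro: continuous_intros)
  then show ?thesis unfolding Aop_def by simp
qed

lemma tBop_decay:
  assumes vc: "continuous_on {1..} v" and vb: "\<And>s. s \<ge> 1 \<Longrightarrow> \<bar>v s\<bar> \<le> N * s^2" and t: "t \<ge> 1"
  shows "\<bar>t * Bop b v t\<bar> \<le> 4096 * B * N * exp (-t)"
proof -
  have "\<bar>integral {t..} (\<lambda>s. (t / s) * b s * v s)\<bar> \<le> 1 * (4096 * B * N * exp (-t))"
  proof (rule gen_bound[OF bcont bbd t _ _ _ vc, where F="\<lambda>_. 1"])
    show "\<bar>v s\<bar> \<le> N * s^2 * 1" if "s \<ge> 1" for s using vb[OF that] by simp
    show "(4096 * B) * N * 1 * exp (-s) \<le> (4096 * B * N) * exp (-s)" for s by simp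
    show "((\<lambda>s. (4096 * B * N) * exp (-s)) has_integral (4096 * B * N * exp (-t))) {t..}"
      by (rule has_integral_exp1)
    show "continuous_on {t..} (\<lambda>s. t / s)" using t by (intro continuous_intros) auto
    fix s assume s: "s \<ge> t"
    have "t / s \<le> 1" using s t by simp
    also have "1 \<le> s^2" using s t by simp
    finally show "\<bar>t / s\<bar> \<le> 1 * s^2" using s t by simp
  qed auto
  moreover have eq: "t * Bop b v t = integral {t..} (\<lambda>s. (t / s) * b s * v s)"
    by (rule Bop_as[OF bcont bbd])
  ultimately show ?thesis unfolding eq by simp
qed

lemma Kop_biel:
  assumes Bpos: "B > 0" and vc: "continuous_on {1..} v"
    and vb: "\<And>s. s \<ge> 1 \<Longrightarrow> \<bar>v s\<bar> \<le> N * s^2 * EE (4096 * B) s" and t: "t \<ge> 1"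
  shows "\<bar>Kop b v t\<bar> \<le> 2 * (N * ((EE (4096 * B) t - 1) / 2)) / 3"
proof (rule Kop_bound[OF bcont bbd t vc vb])
  show "(4096 * B) * N * EE (4096 * B) s * exp (-s) \<le> N * ((4096 * B) * exp (-s) * EE (4096 * B) s)" for s
    by (simp add: algebra_simps)
  show "((\<lambda>s. N * ((4096 * B) * exp (-s) * EE (4096 * B) s)) has_integral (N * ((EE (4096 * B) t - 1) / 2))) {t..}"
    by (rule has_integral_EE) (use Bpos in simp)
qed

end

lemma EE_ge1: "K \<ge> 0 \<Longrightarrow> EE K s \<ge> 1"
  unfolding EE_def by simp

lemma EE_mono: "K \<ge> 0 \<Longrightarrow> s \<ge> 1 \<Longrightarrow> EE K s \<le> EE K 1"
  unfolding EE_def by (simp add: mult_left_mono)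

lemma EE_cont: "continuous_on S (EE K)"
  unfolding EE_def[abs_def] by (intro continuous_intros)

lemma exists_sol:
  fixes b \<phi> \<phi>' :: "real \<Rightarrow> real" and B :: real
  assumes bcont: "continuous_on {1..} b"
    and bbd: "\<And>s. s \<ge> 1 \<Longrightarrow> \<bar>b s\<bar> \<le> B * exp (-(3/2) * s)"
    and Bpos: "B > 0"
    and phic: "continuous_on {1..} \<phi>"
    and phib: "\<And>t. t \<ge> 1 \<Longrightarrow> \<bar>\<phi> t\<bar> \<le> t^2"
    and dphi: "\<And>t. t \<ge> 1 \<Longrightarrow> (\<phi> has_real_derivative \<phi>' t) (at t within {1..})"
    and dphi': "\<And>t. t \<ge> 1 \<Longrightarrow> (\<phi>' has_real_derivative (2 / t^2) * \<phi> t) (at t within {1..})"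
  shows "\<exists>y y' C. (\<forall>t\<ge>1. (y has_real_derivative y' t) (at t within {1..})) \<and>
     (\<forall>t\<ge>1. (y' has_real_derivative (2 / t^2 + b t) * y t) (at t within {1..})) \<and>
     (\<forall>t\<ge>1. \<bar>y t - \<phi> t\<bar> \<le> C * exp (-t)) \<and> (\<forall>t\<ge>1. \<bar>y' t - \<phi>' t\<bar> \<le> C * exp (-t))"
proof -
  define K0 where "K0 = 4096 * B"
  have K0: "K0 > 0" using Bpos by (simp add: K0_def)
  define E where "E = EE K0"
  define W where "W s = s^2 * E s" for s
  have E1: "E s \<ge> 1" for s using EE_ge1 K0 by (simp add: E_def)
  have Em: "s \<ge> 1 \<Longrightarrow> E s \<le> E 1" for s using EE_mono K0 by (simp add: E_def)
  have Wc: "continuous_on S W" for S unfolding W_def[abs_def] E_def by (intro continuous_intros EE_cont)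
  have W1: "s \<ge> 1 \<Longrightarrow> W s \<ge> s^2" for s using E1[of s] by (simp add: W_def)
  have Wpos: "s \<ge> 1 \<Longrightarrow> W s > 0" for s using W1[of s] one_le_power[of s 2] by linarith
  define vz where "vz z s = W s * apply_bcontfun z s" for z :: "real \<Rightarrow>\<^sub>C real" and s
  have vzc: "continuous_on {1..} (vz z)" for z
    unfolding vz_def[abs_def] by (intro continuous_intros Wc) auto
  have vzb: "\<bar>vz z s\<bar> \<le> (norm z * E 1) * s^2" if "s \<ge> 1" for z s
  proof -
    have "\<bar>vz z s\<bar> = W s * \<bar>apply_bcontfun z s\<bar>" using Wpos[OF that] by (simp add: vz_def abs_mult)
    also have "\<dots> \<le> W s * norm z" using Wpos[OF that] norm_bounded[of z s] by (intro mult_left_mono) auto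
    also have "\<dots> \<le> (s^2 * E 1) * norm z" unfolding W_def using Em[OF that] by (intro mult_right_mono mult_left_mono) auto
    finally show ?thesis by (simp add: algebra_simps)
  qed
  have vzdb: "\<bar>vz z1 s - vz z2 s\<bar> \<le> dist z1 z2 * s^2 * E s" if "s \<ge> 1" for z1 z2 s
  proof -
    have "\<bar>vz z1 s - vz z2 s\<bar> = W s * dist (apply_bcontfun z1 s) (apply_bcontfun z2 s)"
    proof -
      have "vz z1 s - vz z2 s = W s * (apply_bcontfun z1 s - apply_bcontfun z2 s)"
        by (simp add: vz_def right_diff_distrib)
      then show ?thesis using Wpos[OF that] by (simp add: abs_mult dist_real_def)
    qed
    also have "\<dots> \<le> W s * dist z1 z2" using Wpos[OF that] dist_bounded by (intro mult_left_mono) auto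
    finally show ?thesis by (simp add: W_def algebra_simps)
  qed
  define G where "G z t = (\<phi> t + Kop b (vz z) t) / W t" for z t
  have Kc: "continuous_on {1..} (Kop b (vz z))" for z
    by (rule DERIV_continuous_on, rule Kop_deriv[OF bcont bbd vzc vzb]) auto
  have Gc: "continuous_on {1..} (G z)" for z
    unfolding G_def[abs_def] using Wpos by (intro continuous_intros phic Kc Wc) (auto simp: less_le)
  have Kbiel: "\<bar>Kop b v t\<bar> \<le> N * W t / 3"
    if "continuous_on {1..} v" "\<And>s. s \<ge> 1 \<Longrightarrow> \<bar>v s\<bar> \<le> N * s^2 * E s" "t \<ge> 1" for v N t
  proof -
    have vb': "\<bar>v s\<bar> \<le> N * s^2 * EE (4096 * B) s" if "s \<ge> 1" for s
      using \<open>\<And>s. s \<ge> 1 \<Longrightarrow> \<bar>v s\<bar> \<le> N * s^2 * E s\<close>[OF that] unfolding E_def K0_def .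
    have "\<bar>Kop b v t\<bar> \<le> 2 * (N * ((EE (4096 * B) t - 1) / 2)) / 3"
      by (rule Kop_biel[OF bcont bbd Bpos that(1) vb' that(3)])
    then have "\<bar>Kop b v t\<bar> \<le> 2 * (N * ((E t - 1) / 2)) / 3" unfolding E_def K0_def .
    also have "\<dots> \<le> N * W t / 3"
    proof -
      have "0 \<le> N * E 1" using that(2)[of 1] by simp
      then have N0: "N \<ge> 0" using E1[of 1] by (simp add: zero_le_mult_iff)
      have "E t \<le> t^2 * E t" using E1[of t] that(3) one_le_power[of t 2] by (simp add: mult_le_cancel_right1)
      then have "E t - 1 \<le> t^2 * E t" by linarith
      then show ?thesis using N0 unfolding W_def by (simp add: mult_left_mono)
    qed
    finally show ?thesis .
  qed
  have Gb: "\<bar>G z t\<bar> \<le> 1 + norm z / 3" if "t \<ge> 1" for z t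
  proof -
    have k: "\<bar>Kop b (vz z) t\<bar> \<le> norm z * W t / 3"
    proof (rule Kbiel[OF vzc _ that])
      fix s :: real assume s: "s \<ge> 1"
      have "\<bar>vz z s\<bar> = W s * \<bar>apply_bcontfun z s\<bar>" using Wpos[OF s] by (simp add: vz_def abs_mult)
      also have "\<dots> \<le> W s * norm z" using Wpos[OF s] norm_bounded[of z s] by (intro mult_left_mono) auto
      finally show "\<bar>vz z s\<bar> \<le> norm z * s^2 * E s" by (simp add: W_def algebra_simps)
    qed
    have "\<bar>G z t\<bar> \<le> (\<bar>\<phi> t\<bar> + \<bar>Kop b (vz z) t\<bar>) / W t"
      unfolding G_def using Wpos[OF that] by (simp add: abs_div divide_right_mono abs_triangle_ineq)
    also have "\<dots> \<le> (W t + norm z * W t / 3) / W t"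
      using Wpos[OF that] phib[OF that] W1[OF that] k by (intro divide_right_mono) auto
    also have "\<dots> = 1 + norm z / 3" using Wpos[OF that] by (simp add: field_simps)
    finally show ?thesis .
  qed
  define Phi where "Phi z = Bcontfun (\<lambda>t. G z (max t 1))" for z
  have Phimem: "(\<lambda>t. G z (max t 1)) \<in> bcontfun" for z
  proof (rule bcontfun_normI)
    show "continuous_on UNIV (\<lambda>t. G z (max t 1))"
      by (rule continuous_on_compose2[OF Gc[of z]]) (auto intro: continuous_intros)
    show "norm (G z (max t 1)) \<le> 1 + norm z / 3" for t using Gb[of "max t 1" z] by simp
  qed
  have Phiapp: "apply_bcontfun (Phi z) t = G z (max t 1)" for z t
    unfolding Phi_def using Phimem[of z] by (simp add: Bcontfun_inverse)
  have contr: "dist (Phi z1) (Phi z2) \<le> (1/3) * dist z1 z2" for z1 z2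
  proof (rule dist_bound)
    fix x :: real
    define t where "t = max x 1"
    have t: "t \<ge> 1" by (simp add: t_def)
    have "Kop b (vz z1) t - Kop b (vz z2) t = Kop b (\<lambda>s. vz z1 s - vz z2 s) t"
      by (rule Kop_diff[OF bcont bbd vzc vzb vzc vzb t, symmetric])
    moreover have "\<bar>Kop b (\<lambda>s. vz z1 s - vz z2 s) t\<bar> \<le> dist z1 z2 * W t / 3"
      by (rule Kbiel) (use vzdb t in \<open>auto intro: continuous_intros vzc\<close>)
    ultimately have "\<bar>Kop b (vz z1) t - Kop b (vz z2) t\<bar> / W t \<le> (1/3) * dist z1 z2"
      using Wpos[OF t] by (simp add: divide_le_eq)
    moreover have "G z1 t - G z2 t = (Kop b (vz z1) t - Kop b (vz z2) t) / W t"
      unfolding G_def by (simp add: diff_divide_distrib[symmetric])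
    ultimately show "dist (apply_bcontfun (Phi z1) x) (apply_bcontfun (Phi z2) x) \<le> (1/3) * dist z1 z2"
      using Wpos[OF t] unfolding Phiapp dist_real_def t_def[symmetric] by (simp add: abs_div)
  qed
  obtain z where z: "Phi z = z"
    using banach_fix_type[of "1/3" Phi] contr by auto
  define y where "y = vz z"
  define N' where "N' = norm z * E 1"
  have yc: "continuous_on {1..} y" unfolding y_def by (rule vzc)
  have yb: "\<And>s. s \<ge> 1 \<Longrightarrow> \<bar>y s\<bar> \<le> N' * s^2" unfolding y_def N'_def by (rule vzb)
  have yeq: "y t = \<phi> t + Kop b y t" if t: "t \<ge> 1" for t
  proof -
    have "apply_bcontfun z t = G z t" using Phiapp[of z t] t z by simp
    then show ?thesis unfolding y_def G_def vz_def using Wpos[OF t] by (simp add: field_simps)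
  qed
  define y' where "y' t = \<phi>' t - Aop b y t / (3 * t^2) - 2 * t * Bop b y t / 3" for t
  have dy: "(y has_real_derivative y' t) (at t within {1..})" if t: "t \<ge> 1" for t
  proof -
    have "((\<lambda>t. \<phi> t + Kop b y t) has_real_derivative \<phi>' t + (- Aop b y t / (3 * t^2) - 2 * t * Bop b y t / 3)) (at t within {1..})"
      by (rule DERIV_add[OF dphi[OF t] Kop_deriv[OF bcont bbd yc yb t]])
    moreover have "\<phi>' t + (- Aop b y t / (3 * t^2) - 2 * t * Bop b y t / 3) = y' t"
      using t by (simp add: y'_def field_simps)
    ultimately have "((\<lambda>t. \<phi> t + Kop b y t) has_real_derivative y' t) (at t within {1..})"
      by simp
    then show ?thesis
      by (rule has_field_derivative_transform_within[where d=1]) (use t yeq in auto)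
  qed
  have dy': "(y' has_real_derivative (2 / t^2 + b t) * y t) (at t within {1..})" if t: "t \<ge> 1" for t
  proof -
    note A = Aop_deriv[OF bcont bbd yc yb t] and Bd = Bop_deriv[OF bcont bbd yc yb t]
    have d1: "((\<lambda>x. Aop b y x / (3 * x^2)) has_real_derivative
      ((- (t^2 * b t * y t)) * (3 * t^2) - Aop b y t * (3 * (real 2 * t^(2 - Suc 0)))) / ((3 * t^2) * (3 * t^2))) (at t within {1..})"
      by (rule DERIV_divide[OF A DERIV_cmult[OF DERIV_pow]]) (use t in auto)
    have d2: "((\<lambda>x. (2 * x) * Bop b y x) has_real_derivative
      (2 * 1) * Bop b y t + (- (b t * y t / t)) * (2 * t)) (at t within {1..})"
      by (rule DERIV_mult[OF DERIV_cmult[OF DERIV_ident] Bd])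
    have "((\<lambda>t. \<phi>' t - Aop b y t / (3 * t^2) - (2 * t) * Bop b y t / 3) has_real_derivative
      (2 / t^2) * \<phi> t - ((- (t^2 * b t * y t)) * (3 * t^2) - Aop b y t * (3 * (real 2 * t^(2 - Suc 0)))) / ((3 * t^2) * (3 * t^2))
        - ((2 * 1) * Bop b y t + (- (b t * y t / t)) * (2 * t)) / 3) (at t within {1..})"
      by (rule DERIV_diff[OF DERIV_diff[OF dphi'[OF t] d1] DERIV_cdivide[OF d2]])
    moreover have "(2 / t^2) * \<phi> t - ((- (t^2 * b t * y t)) * (3 * t^2) - Aop b y t * (3 * (real 2 * t^(2 - Suc 0)))) / ((3 * t^2) * (3 * t^2))
        - ((2 * 1) * Bop b y t + (- (b t * y t / t)) * (2 * t)) / 3 = (2 / t^2 + b t) * y t"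
    proof -
      have yv: "y t = \<phi> t + Aop b y t / (3 * t) - t^2 * Bop b y t / 3" using yeq[OF t] by (simp add: Kop_def)
      show ?thesis unfolding yv using t by (simp add: field_simps power2_eq_square)
    qed
    ultimately show ?thesis unfolding y'_def by simp
  qed
  have N'0: "N' \<ge> 0" unfolding N'_def using E1[of 1] by simp
  define C where "C = 4096 * B * N'"
  have dec1: "\<bar>y t - \<phi> t\<bar> \<le> C * exp (-t)" if t: "t \<ge> 1" for t
  proof -
    have "\<bar>y t - \<phi> t\<bar> = \<bar>Kop b y t\<bar>" using yeq[OF t] by simp
    also have "\<dots> \<le> 2 * (4096 * B * N' * exp (-t)) / 3" by (rule Kop_decay[OF bcont bbd yc yb t])
    also have "\<dots> \<le> C * exp (-t)" unfolding C_def using Bpos N'0 by simp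
    finally show ?thesis .
  qed
  have dec2: "\<bar>y' t - \<phi>' t\<bar> \<le> C * exp (-t)" if t: "t \<ge> 1" for t
  proof -
    have a: "\<bar>Aop b y t\<bar> \<le> 4096 * B * N' * exp (-t)" by (rule Aop_decay[OF bcont bbd yc yb t])
    have bb: "\<bar>t * Bop b y t\<bar> \<le> 4096 * B * N' * exp (-t)" by (rule tBop_decay[OF bcont bbd yc yb t])
    have "\<bar>y' t - \<phi>' t\<bar> = \<bar>Aop b y t / (3 * t^2) + 2 * (t * Bop b y t) / 3\<bar>" by (simp add: y'_def)
    also have "\<dots> \<le> \<bar>Aop b y t\<bar> / 3 + 2 * \<bar>t * Bop b y t\<bar> / 3"
    proof -
      have t2: "1 \<le> t^2" using t one_le_power[of t 2] by simp
      have "\<bar>Aop b y t / (3 * t^2)\<bar> = (\<bar>Aop b y t\<bar> / 3) / t^2"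
        using t by (simp add: abs_div abs_mult)
      also have "\<dots> \<le> \<bar>Aop b y t\<bar> / 3" using t2 by (simp add: divide_le_eq mult_le_cancel_left1 mult_left_mono)
      finally have "\<bar>Aop b y t / (3 * t^2)\<bar> \<le> \<bar>Aop b y t\<bar> / 3" .
      then show ?thesis by (simp add: abs_triangle_ineq order_trans[OF abs_triangle_ineq] abs_mult)
    qed
    also have "\<dots> \<le> C * exp (-t)" using a bb unfolding C_def by simp
    finally show ?thesis .
  qed
  show ?thesis using dy dy' dec1 dec2 by blast
qed

lemma smooth_from_closed:
  fixes S :: "(real \<Rightarrow> real) set"
  assumes "f \<in> S"
    and cl: "\<And>g. g \<in> S \<Longrightarrow> \<exists>g'\<in>S. \<forall>t\<in>X. (g has_real_derivative g' t) (at t within X)"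
  shows "smooth_on_real X f"
proof -
  obtain d where d: "\<And>g. g \<in> S \<Longrightarrow> d g \<in> S \<and> (\<forall>t\<in>X. (g has_real_derivative d g t) (at t within X))"
    using cl by metis
  define D where "D n = (d ^^ n) f" for n
  have DS: "D n \<in> S" for n
    by (induction n) (auto simp: D_def assms(1) d)
  show ?thesis unfolding smooth_on_real_def
  proof (intro exI[of _ D] conjI allI ballI)
    show "D 0 = f" by (simp add: D_def)
    fix n t assume "t \<in> X"
    then show "(D n has_real_derivative D (Suc n) t) (at t within X)"
      using d[OF DS[of n]] by (simp add: D_def)
  qed
qed

inductive_set alg :: "(real \<Rightarrow> real) set \<Rightarrow> (real \<Rightarrow> real) set" for Gs where
  gen: "g \<in> Gs \<Longrightarrow> g \<in> alg Gs"
| const: "(\<lambda>t. c) \<in> alg Gs"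
| add: "f \<in> alg Gs \<Longrightarrow> g \<in> alg Gs \<Longrightarrow> (\<lambda>t. f t + g t) \<in> alg Gs"
| mul: "f \<in> alg Gs \<Longrightarrow> g \<in> alg Gs \<Longrightarrow> (\<lambda>t. f t * g t) \<in> alg Gs"

lemma alg_closed:
  assumes gens: "\<And>g. g \<in> Gs \<Longrightarrow> \<exists>g'\<in>alg Gs. \<forall>t\<in>X. (g has_real_derivative g' t) (at t within X)"
    and "f \<in> alg Gs"
  shows "\<exists>f'\<in>alg Gs. \<forall>t\<in>X. (f has_real_derivative f' t) (at t within X)"
  using assms(2)
proof induction
  case (gen g) then show ?case using gens by blast
next
  case (const c)
  show ?case by (intro bexI[of _ "\<lambda>t. 0"] ballI alg.const) (rule DERIV_const)
next
  case (add f g)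
  then obtain f' g' where f': "f' \<in> alg Gs" "\<forall>t\<in>X. (f has_real_derivative f' t) (at t within X)"
    and g': "g' \<in> alg Gs" "\<forall>t\<in>X. (g has_real_derivative g' t) (at t within X)" by blast
  show ?case
    by (intro bexI[of _ "\<lambda>t. f' t + g' t"] ballI alg.add f'(1) g'(1) DERIV_add) (use f'(2) g'(2) in auto)
next
  case (mul f g)
  then obtain f' g' where f': "f' \<in> alg Gs" "\<forall>t\<in>X. (f has_real_derivative f' t) (at t within X)"
    and g': "g' \<in> alg Gs" "\<forall>t\<in>X. (g has_real_derivative g' t) (at t within X)" by blast
  show ?case
    by (intro bexI[of _ "\<lambda>t. f' t * g t + g' t * f t"] ballI alg.add alg.mul f'(1) g'(1) mul.hyps DERIV_mult)
       (use f'(2) g'(2) in auto)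
qed

lemma alg_smooth:
  assumes gens: "\<And>g. g \<in> Gs \<Longrightarrow> \<exists>g'\<in>alg Gs. \<forall>t\<in>X. (g has_real_derivative g' t) (at t within X)"
    and "f \<in> alg Gs"
  shows "smooth_on_real X f"
  using smooth_from_closed[OF assms(2) alg_closed[OF gens]] by blast

lemma wronsk_const:
  fixes u u' v v' a :: "real \<Rightarrow> real"
  assumes du: "\<And>t. t \<ge> 1 \<Longrightarrow> (u has_real_derivative u' t) (at t within {1..})"
    and du': "\<And>t. t \<ge> 1 \<Longrightarrow> (u' has_real_derivative a t * u t) (at t within {1..})"
    and dv: "\<And>t. t \<ge> 1 \<Longrightarrow> (v has_real_derivative v' t) (at t within {1..})"
    and dv': "\<And>t. t \<ge> 1 \<Longrightarrow> (v' has_real_derivative a t * v t) (at t within {1..})"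
  shows "\<exists>c. \<forall>t\<in>{1..}. u t * v' t - u' t * v t = c"
proof (rule has_field_derivative_zero_constant)
  show "convex {1::real..}" by (rule convex_real_interval)
  fix t :: real assume "t \<in> {1..}"
  then have t: "t \<ge> 1" by simp
  have "((\<lambda>t. u t * v' t - u' t * v t) has_real_derivative
      (u' t * v' t + (a t * v t) * u t) - ((a t * u t) * v t + v' t * u' t)) (at t within {1..})"
    by (rule DERIV_diff[OF DERIV_mult[OF du[OF t] dv'[OF t]] DERIV_mult[OF du'[OF t] dv[OF t]]])
  moreover have "(u' t * v' t + (a t * v t) * u t) - ((a t * u t) * v t + v' t * u' t) = 0"
    by (simp add: algebra_simps)
  ultimately show "((\<lambda>t. u t * v' t - u' t * v t) has_real_derivative 0) (at t within {1..})" by simp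
qed

lemma abs6: "\<bar>(a::real) - b + c - d - e - f\<bar> \<le> \<bar>a\<bar> + \<bar>b\<bar> + \<bar>c\<bar> + \<bar>d\<bar> + \<bar>e\<bar> + \<bar>f\<bar>"
  by arith

lemma W_nonzero:
  fixes y1 y1' y2 y2' :: "real \<Rightarrow> real"
  assumes b1: "\<And>t. t \<ge> 1 \<Longrightarrow> \<bar>y1 t - t^2\<bar> \<le> C * exp (-t)"
    and b1': "\<And>t. t \<ge> 1 \<Longrightarrow> \<bar>y1' t - 2 * t\<bar> \<le> C * exp (-t)"
    and b2: "\<And>t. t \<ge> 1 \<Longrightarrow> \<bar>y2 t - 1 / t\<bar> \<le> C * exp (-t)"
    and b2': "\<And>t. t \<ge> 1 \<Longrightarrow> \<bar>y2' t - (- 1 / t^2)\<bar> \<le> C * exp (-t)"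
    and W: "\<And>t. t \<ge> 1 \<Longrightarrow> y1 t * y2' t - y1' t * y2 t = c"
  shows "c \<noteq> 0"
proof
  assume c0: "c = 0"
  have "0 \<le> C * exp (- 1)" using order_trans[OF abs_ge_zero b1[OF order_refl]] by simp
  then have C0: "C \<ge> 0" by (simp add: zero_le_mult_iff)
  have bound: "3 \<le> C * (t^2 * exp (-t)) + (2 * C) * (t * exp (-t)) + (2 * C + 2 * C^2) * exp (-t)"
    if t: "t \<ge> 1" for t
  proof -
    define e where "e = exp (-t)"
    have e0: "e > 0" and e1: "e \<le> 1" using t by (auto simp: e_def)
    define e1 where "e1 = y1 t - t^2"
    define d1 where "d1 = y1' t - 2 * t"
    define e2 where "e2 = y2 t - 1 / t"
    define d2 where "d2 = y2' t - (- 1 / t^2)"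
    have be1: "\<bar>e1\<bar> \<le> C * e" using b1[OF t] by (simp add: e1_def e_def)
    have bd1: "\<bar>d1\<bar> \<le> C * e" using b1'[OF t] by (simp add: d1_def e_def)
    have be2: "\<bar>e2\<bar> \<le> C * e" using b2[OF t] by (simp add: e2_def e_def)
    have bd2: "\<bar>d2\<bar> \<le> C * e" using b2'[OF t] by (simp add: d2_def e_def)
    have id: "c + 3 = t^2 * d2 - e1 / t^2 + e1 * d2 - 2 * t * e2 - d1 / t - d1 * e2"
    proof -
      have "y1 t = t^2 + e1" "y1' t = 2 * t + d1" "y2 t = 1 / t + e2" "y2' t = - 1 / t^2 + d2"
        by (simp_all add: e1_def d1_def e2_def d2_def)
      then have "c = (t^2 + e1) * (- 1 / t^2 + d2) - (2 * t + d1) * (1 / t + e2)"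
        using W[OF t] by simp
      then show ?thesis using t by (simp add: field_simps power2_eq_square)
    qed
    have t2: "t^2 \<ge> 1" using t one_le_power[of t 2] by simp
    have Ce: "C * e \<ge> 0" using C0 e0 by simp
    have s1: "\<bar>t^2 * d2\<bar> \<le> t^2 * (C * e)" using bd2 by (simp add: abs_mult mult_left_mono)
    have s2: "\<bar>e1 / t^2\<bar> \<le> C * e"
    proof -
      have "\<bar>e1 / t^2\<bar> = \<bar>e1\<bar> / t^2" by (simp add: abs_div)
      also have "\<dots> \<le> \<bar>e1\<bar>" using t2 by (simp add: divide_le_eq mult_le_cancel_left1 mult_left_mono)
      finally show ?thesis using be1 by simp
    qed
    have s3: "\<bar>e1 * d2\<bar> \<le> C^2 * e"
    proof -
      have "\<bar>e1 * d2\<bar> \<le> (C * e) * (C * e)" unfolding abs_mult using be1 bd2 by (intro mult_mono) auto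
      also have "\<dots> = C^2 * e * e" by (simp add: power2_eq_square)
      also have "\<dots> \<le> C^2 * e * 1" using e1 e0 C0 by (intro mult_left_mono) auto
      finally show ?thesis by simp
    qed
    have s4: "\<bar>2 * t * e2\<bar> \<le> 2 * t * (C * e)" using be2 t by (simp add: abs_mult mult_left_mono)
    have s5: "\<bar>d1 / t\<bar> \<le> C * e"
    proof -
      have "\<bar>d1 / t\<bar> = \<bar>d1\<bar> / t" using t by (simp add: abs_div)
      also have "\<dots> \<le> \<bar>d1\<bar>" using t by (simp add: divide_le_eq mult_le_cancel_left1 mult_left_mono)
      finally show ?thesis using bd1 by simp
    qed
    have s6: "\<bar>d1 * e2\<bar> \<le> C^2 * e"
    proof -
      have "\<bar>d1 * e2\<bar> \<le> (C * e) * (C * e)" unfolding abs_mult using bd1 be2 by (intro mult_mono) auto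
      also have "\<dots> = C^2 * e * e" by (simp add: power2_eq_square)
      also have "\<dots> \<le> C^2 * e * 1" using e1 e0 C0 by (intro mult_left_mono) auto
      finally show ?thesis by simp
    qed
    have "3 = \<bar>c + 3\<bar>" using c0 by simp
    also have "\<dots> \<le> \<bar>t^2 * d2\<bar> + \<bar>e1 / t^2\<bar> + \<bar>e1 * d2\<bar> + \<bar>2 * t * e2\<bar> + \<bar>d1 / t\<bar> + \<bar>d1 * e2\<bar>"
      unfolding id by (rule abs6)
    also have "\<dots> \<le> t^2 * (C * e) + C * e + C^2 * e + 2 * t * (C * e) + C * e + C^2 * e"
      using s1 s2 s3 s4 s5 s6 by linarith
    also have "\<dots> = C * (t^2 * exp (-t)) + (2 * C) * (t * exp (-t)) + (2 * C + 2 * C^2) * exp (-t)"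
      by (simp add: e_def algebra_simps)
    finally show ?thesis .
  qed
  have l1: "((\<lambda>t::real. t^2 * exp (-t)) \<longlongrightarrow> 0) at_top" by real_asymp
  have l2: "((\<lambda>t::real. t * exp (-t)) \<longlongrightarrow> 0) at_top" by real_asymp
  have l3: "((\<lambda>t::real. exp (-t)) \<longlongrightarrow> 0) at_top" by real_asymp
  have "((\<lambda>t. C * (t^2 * exp (-t)) + (2 * C) * (t * exp (-t)) + (2 * C + 2 * C^2) * exp (-t)) \<longlongrightarrow>
      C * 0 + (2 * C) * 0 + (2 * C + 2 * C^2) * 0) at_top"
    by (intro tendsto_intros l1 l2 l3)
  then have "\<forall>\<^sub>F t in at_top. C * (t^2 * exp (-t)) + (2 * C) * (t * exp (-t)) + (2 * C + 2 * C^2) * exp (-t) < 3"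
    by (intro order_tendstoD(2)) auto
  then obtain N where N: "\<And>t. t \<ge> N \<Longrightarrow> C * (t^2 * exp (-t)) + (2 * C) * (t * exp (-t)) + (2 * C + 2 * C^2) * exp (-t) < 3"
    unfolding eventually_at_top_linorder by auto
  show False using N[of "max N 1"] bound[of "max N 1"] by simp
qed

theorem lemma3p1:
  fixes Q :: "real \<Rightarrow> real"
  assumes "ground_state_profile Q"
  shows "\<exists>\<eta>1 \<eta>2 :: real \<Rightarrow> real.
           smooth_on_real {1..} \<eta>1 \<and> smooth_on_real {1..} \<eta>2 \<and>
           bdd_above ((\<lambda>t. \<bar>exp t * \<eta>1 t\<bar> + \<bar>exp t * \<eta>2 t\<bar>) ` {1..}) \<and>
           (\<forall>F F' F'' :: real \<Rightarrow> real.
              smooth_on_real {1..} F \<and>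
              (\<forall>t\<ge>1. (F has_real_derivative F' t) (at t within {1..})) \<and>
              (\<forall>t\<ge>1. (F' has_real_derivative F'' t) (at t within {1..})) \<and>
              (\<forall>t\<ge>1. F'' t = (2 / t ^ 2 - 3 * (Q t) ^ 2) * F t)
              \<longrightarrow> (\<exists>c1 c2 :: real. \<forall>t\<ge>1.
                     F t = c1 * (t ^ 2 + \<eta>1 t) + c2 * (1 / t + \<eta>2 t)))"
proof -
  obtain Q' Q'' where pos: "\<And>t. t \<ge> 0 \<Longrightarrow> Q t > 0"
    and dQ0: "\<And>t. t \<ge> 0 \<Longrightarrow> (Q has_real_derivative Q' t) (at t within {0..})"
    and dQ'0: "\<And>t. t \<ge> 0 \<Longrightarrow> (Q' has_real_derivative Q'' t) (at t within {0..})"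
    and ode0: "\<And>t. t > 0 \<Longrightarrow> - Q'' t - (2 / t) * Q' t + Q t - (Q t) ^ 3 = 0"
    and lim: "(Q \<longlongrightarrow> 0) at_top"
    using assms unfolding ground_state_profile_def by blast
  have atw: "at t within {0..} = at t" if "t > 0" for t :: real
    by (rule at_within_open_subset[of t "{0<..}"]) (use that in auto)
  have dQ: "(Q has_real_derivative Q' t) (at t)" if "t > 0" for t
    using dQ0[of t] that atw[OF that] by simp
  have dQ': "(Q' has_real_derivative Q'' t) (at t)" if "t > 0" for t
    using dQ'0[of t] that atw[OF that] by simp
  have ode: "Q'' t = Q t - (Q t)^3 - 2 / t * Q' t" if "t > 0" for t
    using ode0[OF that] by simp
  obtain Cq where Cq: "\<And>t. t \<ge> 1 \<Longrightarrow> Q t \<le> Cq * exp (-(3/4) * t)"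
    using decay_Q[OF dQ dQ' ode pos lim] by blast
  have dQ1: "(Q has_real_derivative Q' t) (at t within {1..})" if "t \<ge> 1" for t
    using DERIV_subset[OF dQ0[of t]] that by auto
  have dQ'1: "(Q' has_real_derivative Q'' t) (at t within {1..})" if "t \<ge> 1" for t
    using DERIV_subset[OF dQ'0[of t]] that by auto
  have Qc: "continuous_on {1..} Q" by (rule DERIV_continuous_on[OF dQ1]) auto
  define b where "b t = - 3 * (Q t)^2" for t
  define B where "B = 3 * Cq^2 + 1"
  have bcont: "continuous_on {1..} b" unfolding b_def[abs_def] by (intro continuous_intros Qc)
  have Bpos: "B > 0" unfolding B_def by (simp add: add_nonneg_pos)
  have bbd: "\<bar>b s\<bar> \<le> B * exp (-(3/2) * s)" if s: "s \<ge> 1" for s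
  proof -
    have q: "0 < Q s" "Q s \<le> Cq * exp (-(3/4) * s)" using pos[of s] Cq[OF s] s by auto
    have "(Q s)^2 \<le> (Cq * exp (-(3/4) * s))^2" using q by (intro power_mono) auto
    also have "\<dots> = Cq^2 * exp (-(3/2) * s)"
      by (simp add: power_mult_distrib power2_eq_square exp_add[symmetric])
    finally have "\<bar>b s\<bar> \<le> 3 * (Cq^2 * exp (-(3/2) * s))" by (simp add: b_def)
    also have "\<dots> \<le> B * exp (-(3/2) * s)" unfolding B_def by (simp add: algebra_simps)
    finally show ?thesis .
  qed
  obtain y1 y1' C1 where y1d: "\<forall>t\<ge>1. (y1 has_real_derivative y1' t) (at t within {1..})"
    and y1d': "\<forall>t\<ge>1. (y1' has_real_derivative (2 / t^2 + b t) * y1 t) (at t within {1..})"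
    and y1b: "\<forall>t\<ge>1. \<bar>y1 t - t^2\<bar> \<le> C1 * exp (-t)"
    and y1b': "\<forall>t\<ge>1. \<bar>y1' t - 2 * t\<bar> \<le> C1 * exp (-t)"
  proof -
    have "\<exists>y y' C. (\<forall>t\<ge>1. (y has_real_derivative y' t) (at t within {1..})) \<and>
     (\<forall>t\<ge>1. (y' has_real_derivative (2 / t^2 + b t) * y t) (at t within {1..})) \<and>
     (\<forall>t\<ge>1. \<bar>y t - t^2\<bar> \<le> C * exp (-t)) \<and> (\<forall>t\<ge>1. \<bar>y' t - 2 * t\<bar> \<le> C * exp (-t))"
    proof (rule exists_sol[OF bcont bbd Bpos])
      show "continuous_on {1..} (\<lambda>t::real. t^2)" by (intro continuous_intros)
      show "\<bar>t^2\<bar> \<le> t^2" for t :: real by simp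
      show "((\<lambda>t. t^2) has_real_derivative 2 * t) (at t within {1..})" for t :: real
        by (auto intro!: derivative_eq_intros)
      fix t :: real assume t: "t \<ge> 1"
      have "((\<lambda>t. 2 * t) has_real_derivative 2) (at t within {1..})"
        by (auto intro!: derivative_eq_intros)
      moreover have "(2::real) = (2 / t^2) * t^2" using t by simp
      ultimately show "((\<lambda>t. 2 * t) has_real_derivative (2 / t^2) * t^2) (at t within {1..})" by simp
    qed
    then show ?thesis using that by blast
  qed
  obtain y2 y2' C2 where y2d: "\<forall>t\<ge>1. (y2 has_real_derivative y2' t) (at t within {1..})"
    and y2d': "\<forall>t\<ge>1. (y2' has_real_derivative (2 / t^2 + b t) * y2 t) (at t within {1..})"
    and y2b: "\<forall>t\<ge>1. \<bar>y2 t - 1 / t\<bar> \<le> C2 * exp (-t)"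
    and y2b': "\<forall>t\<ge>1. \<bar>y2' t - (- 1 / t^2)\<bar> \<le> C2 * exp (-t)"
  proof -
    have "\<exists>y y' C. (\<forall>t\<ge>1. (y has_real_derivative y' t) (at t within {1..})) \<and>
     (\<forall>t\<ge>1. (y' has_real_derivative (2 / t^2 + b t) * y t) (at t within {1..})) \<and>
     (\<forall>t\<ge>1. \<bar>y t - 1 / t\<bar> \<le> C * exp (-t)) \<and> (\<forall>t\<ge>1. \<bar>y' t - (- 1 / t^2)\<bar> \<le> C * exp (-t))"
    proof (rule exists_sol[OF bcont bbd Bpos])
      show "continuous_on {1..} (\<lambda>t::real. 1 / t)" by (intro continuous_intros) auto
      fix t :: real assume t: "t \<ge> 1"
      have "1 / t \<le> 1" using t by simp
      also have "1 \<le> t^2" using t one_le_power[of t 2] by simp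
      finally show "\<bar>1 / t\<bar> \<le> t^2" using t by simp
      have "((\<lambda>t. 1 / t) has_real_derivative (0 * t - 1 * 1) / (t * t)) (at t within {1..})"
        using t by (intro DERIV_divide DERIV_const DERIV_ident) auto
      then show "((\<lambda>t. 1 / t) has_real_derivative - 1 / t^2) (at t within {1..})"
        by (simp add: power2_eq_square)
      have "((\<lambda>t. - 1 / t^2) has_real_derivative (0 * t^2 - (- 1) * (real 2 * t^(2 - Suc 0))) / (t^2 * t^2)) (at t within {1..})"
        using t by (intro DERIV_divide DERIV_const DERIV_pow) auto
      moreover have "(0 * t^2 - (- 1) * (real 2 * t^(2 - Suc 0))) / (t^2 * t^2) = (2 / t^2) * (1 / t)"
        using t by (simp add: field_simps power2_eq_square)
      ultimately show "((\<lambda>t. - 1 / t^2) has_real_derivative (2 / t^2) * (1 / t)) (at t within {1..})" by simp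
    qed
    then show ?thesis using that by blast
  qed
  obtain c where c: "\<forall>t\<in>{1..}. y1 t * y2' t - y1' t * y2 t = c"
    using wronsk_const[of y1 y1' "\<lambda>t. 2 / t^2 + b t" y2 y2'] y1d y1d' y2d y2d' by auto
  define C where "C = max C1 C2"
  have c0: "c \<noteq> 0"
  proof (rule W_nonzero[of y1 C y1' y2 y2'])
    have e: "exp (-t) > 0" for t :: real by simp
    show "\<bar>y1 t - t^2\<bar> \<le> C * exp (-t)" if "t \<ge> 1" for t
      unfolding C_def using order_trans[OF y1b[rule_format, OF that] mult_right_mono[OF max.cobounded1[of C1 C2] less_imp_le[OF e[of t]]]] .
    show "\<bar>y1' t - 2 * t\<bar> \<le> C * exp (-t)" if "t \<ge> 1" for t
      unfolding C_def using order_trans[OF y1b'[rule_format, OF that] mult_right_mono[OF max.cobounded1[of C1 C2] less_imp_le[OF e[of t]]]] .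
    show "\<bar>y2 t - 1 / t\<bar> \<le> C * exp (-t)" if "t \<ge> 1" for t
      unfolding C_def using order_trans[OF y2b[rule_format, OF that] mult_right_mono[OF max.cobounded2[of C2 C1] less_imp_le[OF e[of t]]]] .
    show "\<bar>y2' t - (- 1 / t^2)\<bar> \<le> C * exp (-t)" if "t \<ge> 1" for t
      unfolding C_def using order_trans[OF y2b'[rule_format, OF that] mult_right_mono[OF max.cobounded2[of C2 C1] less_imp_le[OF e[of t]]]] .
    show "y1 t * y2' t - y1' t * y2 t = c" if "t \<ge> 1" for t using c that by auto
  qed
  define \<eta>1 where "\<eta>1 t = y1 t + (-1) * (t * t)" for t :: real
  define \<eta>2 where "\<eta>2 t = y2 t + (-1) * (1 / t)" for t :: real
  define Gs where "Gs = {Q, Q', y1, y1', y2, y2', (\<lambda>t::real. t), (\<lambda>t::real. 1 / t)}"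
  have gens: "\<exists>g'\<in>alg Gs. \<forall>t\<in>{1..}. (g has_real_derivative g' t) (at t within {1..})" if "g \<in> Gs" for g
  proof -
    have inG: "h \<in> alg Gs" if "h \<in> Gs" for h using that by (rule alg.gen)
    have Q: "Q \<in> alg Gs" "Q' \<in> alg Gs" "y1 \<in> alg Gs" "y1' \<in> alg Gs" "y2 \<in> alg Gs" "y2' \<in> alg Gs"
      "(\<lambda>t::real. t) \<in> alg Gs" "(\<lambda>t::real. 1 / t) \<in> alg Gs"
      by (rule inG; simp add: Gs_def)+
    note I = alg.const alg.add alg.mul Q
    have aQ: "(\<lambda>t. 2 * ((1 / t) * (1 / t)) + (- 3) * (Q t * Q t)) \<in> alg Gs"
      by (intro I)
    from that[unfolded Gs_def] show ?thesis
    proof (elim insertE emptyE)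
      assume "g = Q" then show ?thesis using dQ1 Q by auto
    next
      assume g: "g = Q'"
      show ?thesis
      proof (rule bexI[of _ "\<lambda>t. Q t + (-1) * (Q t * (Q t * Q t)) + (-2) * ((1 / t) * Q' t)"], intro ballI)
        fix t :: real assume "t \<in> {1..}"
        then have t: "t \<ge> 1" by simp
        have "Q'' t = Q t + (-1) * (Q t * (Q t * Q t)) + (-2) * ((1 / t) * Q' t)"
          using ode[of t] t by (simp add: power3_eq_cube)
        then show "(g has_real_derivative Q t + (-1) * (Q t * (Q t * Q t)) + (-2) * ((1 / t) * Q' t)) (at t within {1..})"
          using dQ'1[OF t] g by simp
      qed (intro I)
    next
      assume "g = y1" then show ?thesis using y1d Q by auto
    next
      assume g: "g = y1'"
      show ?thesis
      proof (rule bexI[of _ "\<lambda>t. (2 * ((1 / t) * (1 / t)) + (- 3) * (Q t * Q t)) * y1 t"], intro ballI)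
        fix t :: real assume "t \<in> {1..}"
        then have t: "t \<ge> 1" by simp
        have "(2 / t^2 + b t) * y1 t = (2 * ((1 / t) * (1 / t)) + (- 3) * (Q t * Q t)) * y1 t"
          by (simp add: b_def power2_eq_square)
        then show "(g has_real_derivative (2 * ((1 / t) * (1 / t)) + (- 3) * (Q t * Q t)) * y1 t) (at t within {1..})"
          using y1d' t g by metis
      qed (intro I)
    next
      assume "g = y2" then show ?thesis using y2d Q by auto
    next
      assume g: "g = y2'"
      show ?thesis
      proof (rule bexI[of _ "\<lambda>t. (2 * ((1 / t) * (1 / t)) + (- 3) * (Q t * Q t)) * y2 t"], intro ballI)
        fix t :: real assume "t \<in> {1..}"
        then have t: "t \<ge> 1" by simp
        have "(2 / t^2 + b t) * y2 t = (2 * ((1 / t) * (1 / t)) + (- 3) * (Q t * Q t)) * y2 t"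
          by (simp add: b_def power2_eq_square)
        then show "(g has_real_derivative (2 * ((1 / t) * (1 / t)) + (- 3) * (Q t * Q t)) * y2 t) (at t within {1..})"
          using y2d' t g by metis
      qed (intro I)
    next
      assume g: "g = (\<lambda>t. t)"
      show ?thesis
        by (rule bexI[of _ "\<lambda>t. 1"]) (auto simp: g intro: DERIV_ident alg.const)
    next
      assume g: "g = (\<lambda>t. 1 / t)"
      show ?thesis
      proof (rule bexI[of _ "\<lambda>t. (-1) * ((1 / t) * (1 / t))"], intro ballI)
        fix t :: real assume "t \<in> {1..}"
        then have t: "t \<ge> 1" by simp
        have "((\<lambda>t. 1 / t) has_real_derivative (0 * t - 1 * 1) / (t * t)) (at t within {1..})"
          using t by (intro DERIV_divide DERIV_const DERIV_ident) auto
        then show "(g has_real_derivative (-1) * ((1 / t) * (1 / t))) (at t within {1..})"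
          using g by simp
      qed (intro I)
    qed
  qed
  have sm1: "smooth_on_real {1..} \<eta>1"
  proof (rule alg_smooth[OF gens])
    show "\<eta>1 \<in> alg Gs" unfolding \<eta>1_def[abs_def]
      by (intro alg.add alg.mul alg.const alg.gen) (auto simp: Gs_def)
  qed
  have sm2: "smooth_on_real {1..} \<eta>2"
  proof (rule alg_smooth[OF gens])
    show "\<eta>2 \<in> alg Gs" unfolding \<eta>2_def[abs_def]
      by (intro alg.add alg.mul alg.const alg.gen) (auto simp: Gs_def)
  qed
  have bdd: "bdd_above ((\<lambda>t. \<bar>exp t * \<eta>1 t\<bar> + \<bar>exp t * \<eta>2 t\<bar>) ` {1..})"
  proof (rule bdd_aboveI2)
    fix t :: real assume "t \<in> {1..}"
    then have t: "t \<ge> 1" by simp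
    have "\<bar>exp t * \<eta>1 t\<bar> = exp t * \<bar>y1 t - t^2\<bar>" by (simp add: \<eta>1_def abs_mult power2_eq_square)
    also have "\<dots> \<le> exp t * (C1 * exp (-t))" using y1b t by (intro mult_left_mono) auto
    also have "\<dots> = C1" by (simp add: exp_minus)
    finally have 1: "\<bar>exp t * \<eta>1 t\<bar> \<le> C1" .
    have "\<bar>exp t * \<eta>2 t\<bar> = exp t * \<bar>y2 t - 1 / t\<bar>" by (simp add: \<eta>2_def abs_mult)
    also have "\<dots> \<le> exp t * (C2 * exp (-t))" using y2b t by (intro mult_left_mono) auto
    also have "\<dots> = C2" by (simp add: exp_minus)
    finally have 2: "\<bar>exp t * \<eta>2 t\<bar> \<le> C2" .
    show "\<bar>exp t * \<eta>1 t\<bar> + \<bar>exp t * \<eta>2 t\<bar> \<le> C1 + C2" using 1 2 by simp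
  qed
  have main: "\<exists>c1 c2 :: real. \<forall>t\<ge>1. F t = c1 * (t ^ 2 + \<eta>1 t) + c2 * (1 / t + \<eta>2 t)"
    if dF: "\<forall>t\<ge>1. (F has_real_derivative F' t) (at t within {1..})"
      and dF': "\<forall>t\<ge>1. (F' has_real_derivative F'' t) (at t within {1..})"
      and odeF: "\<forall>t\<ge>1. F'' t = (2 / t ^ 2 - 3 * (Q t) ^ 2) * F t" for F F' F''
  proof -
    have dF'': "(F' has_real_derivative (2 / t^2 + b t) * F t) (at t within {1..})" if "t \<ge> 1" for t
      using dF'[rule_format, OF that] odeF[rule_format, OF that] by (simp add: b_def)
    obtain k2 where k2: "\<forall>t\<in>{1..}. F t * y2' t - F' t * y2 t = k2"
      using wronsk_const[of F F' "\<lambda>t. 2 / t^2 + b t" y2 y2'] dF dF'' y2d y2d' by auto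
    obtain k1 where k1: "\<forall>t\<in>{1..}. F t * y1' t - F' t * y1 t = k1"
      using wronsk_const[of F F' "\<lambda>t. 2 / t^2 + b t" y1 y1'] dF dF'' y1d y1d' by auto
    have "\<forall>t\<ge>1. F t = (k2 / c) * (t^2 + \<eta>1 t) + (- k1 / c) * (1 / t + \<eta>2 t)"
    proof (intro allI impI)
      fix t :: real assume t: "t \<ge> 1"
      have e: "y1 t * y2' t - y1' t * y2 t = c" "F t * y2' t - F' t * y2 t = k2" "F t * y1' t - F' t * y1 t = k1"
        using c k1 k2 t by auto
      have "F t * c = y1 t * k2 - y2 t * k1" unfolding e[symmetric] by (simp add: algebra_simps)
      then have "F t = (k2 / c) * y1 t + (- k1 / c) * y2 t" using c0 by (simp add: field_simps)
      moreover have "t^2 + \<eta>1 t = y1 t" "1 / t + \<eta>2 t = y2 t"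
        by (simp_all add: \<eta>1_def \<eta>2_def power2_eq_square)
      ultimately show "F t = (k2 / c) * (t^2 + \<eta>1 t) + (- k1 / c) * (1 / t + \<eta>2 t)" by simp
    qed
    then show ?thesis by blast
  qed
  show ?thesis
    by (intro exI[of _ \<eta>1] exI[of _ \<eta>2] conjI sm1 sm2 bdd allI impI) (use main in blast)
qed

end
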